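(* Let $B$ be a nilpotent $n\times n$ matrix with $\mathrm{sh}(B)=(\lambda_1,\lambda_2)$, $\lambda_1\ge\lambda_2\ge1$, $n=\lambda_1+\lambda_2$. Choose integers $j,\ell$ with $0\le j\le\ell<\lambda_2$ and put $w=\lambda_1-\lambda_2+j+\ell$, assuming $w\ge1$. (a) If there is an integer $k$ with $\lambda_2\le kw<\lambda_1$, then $\big((2k+1)^{\lambda_1-kw},(2k)^{w+\lambda_2-\lambda_1},(2k-1)^{kw-\lambda_2}\big)\in\mathcal{P}(\mathcal{N}_B)$. (b) If there is an integer $k$ with $\lambda_1-\ell\le kw<\lambda_2-j$, then $\big((2k+2)^{\lambda_2-kw-j},(2k+1)^{w+j-\ell},(2k)^{kw+\ell-\lambda_2}\big)\in\mathcal{P}(\mathcal{N}_B)$. (c) If neither of the conditions in (a) and (b) holds, then $r(n,w)\in\mathcal{P}(\mathcal{N}_B)$.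
   Context: $\mathbb{F}$ is an algebraically closed field of characteristic $0$. For a nilpotent matrix $A$, $\mathrm{sh}(A)$ is the partition of $n$ given by the sizes of the Jordan blocks of its Jordan canonical form; $\mathcal{N}_B$ is the set of nilpotent $n\times n$ matrices commuting with $B$ and $\mathcal{P}(\mathcal{N}_B)=\{\mathrm{sh}(A):A\in\mathcal{N}_B\}$. The notation $(m_1^{r_1},m_2^{r_2},\ldots)$ denotes the partition with $r_i$ parts equal to $m_i$ (parts with exponent $0$ omitted). For $1\le t\le n$, $r(n,t)$ denotes the unique partition of $n$ with exactly $t$ parts whose largest and smallest parts differ by at most $1$, i.e. $r(n,t)=(\lceil n/t\rceil^{\rho},\lfloor n/t\rfloor^{t-\rho})$ with $\rho=n-t\lfloor n/t\rfloor$ (an "almost rectangular partition"); when $t>n$ one interprets $r(n,t)=(1^n)$. *)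

theory Defs
  imports "Jordan_Normal_Form.Jordan_Normal_Form_Uniqueness"
begin

definition nilpotent_mat :: "'a :: semiring_1 mat \<Rightarrow> bool" where
  "nilpotent_mat A \<longleftrightarrow> square_mat A \<and> (\<exists>k. A ^\<^sub>m k = 0\<^sub>m (dim_row A) (dim_col A))"

text \<open>sh(A) = p: the multiset of Jordan block sizes of A is the partition p
  (partitions are represented as multisets of positive naturals).\<close>
definition has_shape :: "'a :: semiring_1 mat \<Rightarrow> nat multiset \<Rightarrow> bool" where
  "has_shape A p \<longleftrightarrow> (\<exists>n_as. jordan_nf A n_as \<and> mset (map fst n_as) = p)"

definition shapes_NB :: "nat \<Rightarrow> 'a :: semiring_1 mat \<Rightarrow> nat multiset set" where
  "shapes_NB n B = {p. \<exists>A \<in> carrier_mat n n. nilpotent_mat A \<and> A * B = B * A \<and> has_shape A p}"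

definition almost_rect :: "nat \<Rightarrow> nat \<Rightarrow> nat multiset" where
  "almost_rect n t =
     (if t \<le> n then replicate_mset (n mod t) (n div t + 1) + replicate_mset (t - n mod t) (n div t)
      else replicate_mset n 1)"

end

theory Submission
  imports Defs "Jordan_Normal_Form.Jordan_Normal_Form_Existence"
begin


definition rk :: "nat \<Rightarrow> (nat \<Rightarrow> 'b::linorder) \<Rightarrow> nat \<Rightarrow> nat" where
  "rk n K x = card {y. y < n \<and> K y < K x}"

lemma rk_mono:
  assumes "x < n" "y < n" "K x < K y"
  shows "rk n K x < rk n K y"
proof -
  have "{z. z < n \<and> K z < K x} \<subset> {z. z < n \<and> K z < K y}"
    using assms by auto
  thus ?thesis unfolding rk_def by (intro psubset_card_mono) auto
qed

lemma rk_lt: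
  assumes "x < n" shows "rk n K x < n"
proof -
  have "{z. z < n \<and> K z < K x} \<subset> {..<n}" using assms by auto
  hence "card {z. z < n \<and> K z < K x} < card {..<n}" by (intro psubset_card_mono) auto
  thus ?thesis unfolding rk_def by simp
qed

lemma rk_bij:
  assumes inj: "inj_on K {..<n}"
  shows "bij_betw (rk n K) {..<n} {..<n}"
proof -
  have inj2: "inj_on (rk n K) {..<n}"
  proof (rule inj_onI)
    fix x y assume xy: "x \<in> {..<n}" "y \<in> {..<n}" "rk n K x = rk n K y"
    show "x = y"
    proof (rule ccontr)
      assume "x \<noteq> y"
      hence "K x \<noteq> K y" using inj xy by (auto dest: inj_onD)
      hence "K x < K y \<or> K y < K x" by auto
      moreover have "x < n" "y < n" using xy by auto
      ultimately show False using rk_mono[of x n y K] rk_mono[of y n x K] xy(3) by auto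
    qed
  qed
  have sub: "rk n K ` {..<n} \<subseteq> {..<n}" using rk_lt by blast
  have "card (rk n K ` {..<n}) = card {..<n::nat}"
    using card_image[OF inj2] by simp
  hence "rk n K ` {..<n} = {..<n}"
    using sub by (intro card_subset_eq) auto
  with inj2 show ?thesis by (simp add: bij_betw_def)
qed

lemma rk_mono_iff:
  assumes inj: "inj_on K {..<n}" and xy: "x < n" "y < n"
  shows "rk n K x < rk n K y \<longleftrightarrow> K x < K y"
proof
  assume a: "rk n K x < rk n K y"
  hence "x \<noteq> y" by auto
  hence "K x \<noteq> K y" using inj xy by (auto dest: inj_onD)
  moreover have "\<not> K y < K x" using rk_mono[of y n x K] xy a by auto
  ultimately show "K x < K y" by auto
next
  assume "K x < K y" thus "rk n K x < rk n K y" using rk_mono xy by blast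
qed

section \<open>Matrices of partial maps\<close>

definition pmat :: "nat \<Rightarrow> (nat \<Rightarrow> nat option) \<Rightarrow> 'a :: semiring_1 mat" where
  "pmat n f = mat n n (\<lambda>(i,j). if f i = Some j then 1 else 0)"

definition closed :: "nat \<Rightarrow> (nat \<Rightarrow> nat option) \<Rightarrow> bool" where
  "closed n f \<longleftrightarrow> (\<forall>i<n. \<forall>j. f i = Some j \<longrightarrow> j < n)"

definition ocomp :: "(nat \<Rightarrow> nat option) \<Rightarrow> (nat \<Rightarrow> nat option) \<Rightarrow> nat \<Rightarrow> nat option" where
  "ocomp f g i = (case f i of None \<Rightarrow> None | Some j \<Rightarrow> g j)"

lemma pmat_carrier[simp]: "pmat n f \<in> carrier_mat n n" and pmat_dim[simp]: "dim_row (pmat n f) = n" "dim_col (pmat n f) = n"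
  unfolding pmat_def by auto

lemma pmat_index[simp]: "i < n \<Longrightarrow> j < n \<Longrightarrow> pmat n f $$ (i,j) = (if f i = Some j then 1 else 0)"
  unfolding pmat_def by auto

lemma pmat_cong: "(\<And>i. i < n \<Longrightarrow> f i = g i) \<Longrightarrow> pmat n f = pmat n g"
  by (intro eq_matI) auto

lemma pmat_mult:
  assumes "closed n f"
  shows "(pmat n f :: 'a :: semiring_1 mat) * pmat n g = pmat n (ocomp f g)"
proof (intro eq_matI)
  fix i k assume ik: "i < dim_row (pmat n (ocomp f g) :: 'a mat)" "k < dim_col (pmat n (ocomp f g) :: 'a mat)"
  hence i: "i < n" and k: "k < n" by auto
  have "(pmat n f * pmat n g :: 'a mat) $$ (i,k) = (\<Sum>j<n. pmat n f $$ (i,j) * pmat n g $$ (j,k))"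
    using i k by (simp add: scalar_prod_def atLeast0LessThan)
  also have "\<dots> = (if ocomp f g i = Some k then 1 else 0)"
  proof (cases "f i")
    case None thus ?thesis using i k by (simp add: ocomp_def)
  next
    case (Some j0)
    have j0: "j0 < n" using assms Some i unfolding closed_def by auto
    have "(\<Sum>j<n. pmat n f $$ (i,j) * (pmat n g $$ (j,k) :: 'a)) = (\<Sum>j\<in>{j0}. pmat n f $$ (i,j) * pmat n g $$ (j,k))"
      by (rule sum.mono_neutral_right) (use i k j0 Some in auto)
    thus ?thesis using i k j0 Some by (simp add: ocomp_def)
  qed
  finally show "(pmat n f * pmat n g :: 'a mat) $$ (i,k) = pmat n (ocomp f g) $$ (i,k)" using i k by simp
qed auto

lemma pmat_id: "pmat n Some = 1\<^sub>m n"
  by (intro eq_matI) auto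

lemma pmat_none: "pmat n (\<lambda>_. None) = 0\<^sub>m n n"
  by (intro eq_matI) auto

fun iter :: "(nat \<Rightarrow> nat option) \<Rightarrow> nat \<Rightarrow> nat \<Rightarrow> nat option" where
  "iter f 0 = Some"
| "iter f (Suc k) = ocomp (iter f k) f"

lemma closed_ocomp: assumes "closed n f" "closed n g" shows "closed n (ocomp f g)"
  unfolding closed_def
proof (intro allI impI)
  fix i j assume i: "i < n" and e: "ocomp f g i = Some j"
  then obtain j' where fj: "f i = Some j'" and gj: "g j' = Some j" by (cases "f i") (auto simp: ocomp_def)
  have "j' < n" using assms(1) i fj unfolding closed_def by blast
  thus "j < n" using assms(2) gj unfolding closed_def by blast
qed

lemma closed_Some: "closed n Some" unfolding closed_def by auto

lemma closed_iter: "closed n f \<Longrightarrow> closed n (iter f k)"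
proof (induct k)
  case 0 thus ?case using closed_Some by simp
next
  case (Suc k) thus ?case using closed_ocomp by simp
qed

lemma pmat_pow: assumes "closed n f" shows "(pmat n f :: 'a :: semiring_1 mat) ^\<^sub>m k = pmat n (iter f k)"
proof (induct k)
  case 0 thus ?case by (simp add: pmat_id)
next
  case (Suc k)
  thus ?case using pmat_mult[OF closed_iter[OF assms, of k]] by simp
qed



lemma pmat_similar_wit:
  assumes bij: "bij_betw \<sigma> {..<n} {..<n}" and cf: "closed n f"
    and comm: "\<And>x. x < n \<Longrightarrow> g (\<sigma> x) = map_option \<sigma> (f x)"
  shows "similar_mat_wit (pmat n g :: 'a :: semiring_1 mat) (pmat n f)
     (pmat n (Some \<circ> the_inv_into {..<n} \<sigma>)) (pmat n (Some \<circ> \<sigma>))"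
proof -
  let ?t = "the_inv_into {..<n} \<sigma>"
  have inj: "inj_on \<sigma> {..<n}" and img: "\<sigma> ` {..<n} = {..<n}" using bij by (auto simp: bij_betw_def)
  have t_in: "\<And>i. i < n \<Longrightarrow> ?t i < n" using the_inv_into_into[OF inj] img by auto
  have st: "\<And>i. i < n \<Longrightarrow> \<sigma> (?t i) = i" using f_the_inv_into_f[OF inj] img by auto
  have ts: "\<And>i. i < n \<Longrightarrow> ?t (\<sigma> i) = i" using the_inv_into_f_f[OF inj] by auto
  have s_in: "\<And>i. i < n \<Longrightarrow> \<sigma> i < n" using img by auto
  have ct: "closed n (Some \<circ> ?t)" using t_in unfolding closed_def by auto
  have cs: "closed n (Some \<circ> \<sigma>)" using s_in unfolding closed_def by auto
  have "(pmat n (Some \<circ> ?t) :: 'a mat) * pmat n (Some \<circ> \<sigma>) = pmat n (ocomp (Some \<circ> ?t) (Some \<circ> \<sigma>))"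
    by (rule pmat_mult[OF ct])
  also have "\<dots> = pmat n Some" by (rule pmat_cong) (simp add: ocomp_def st)
  finally have PQ: "(pmat n (Some \<circ> ?t) :: 'a mat) * pmat n (Some \<circ> \<sigma>) = 1\<^sub>m n" by (simp add: pmat_id)
  have "(pmat n (Some \<circ> \<sigma>) :: 'a mat) * pmat n (Some \<circ> ?t) = pmat n (ocomp (Some \<circ> \<sigma>) (Some \<circ> ?t))"
    by (rule pmat_mult[OF cs])
  also have "\<dots> = pmat n Some" by (rule pmat_cong) (simp add: ocomp_def ts)
  finally have QP: "(pmat n (Some \<circ> \<sigma>) :: 'a mat) * pmat n (Some \<circ> ?t) = 1\<^sub>m n" by (simp add: pmat_id)
  have "(pmat n (Some \<circ> ?t) :: 'a mat) * pmat n f * pmat n (Some \<circ> \<sigma>)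
     = pmat n (ocomp (ocomp (Some \<circ> ?t) f) (Some \<circ> \<sigma>))"
  proof -
    have "(pmat n (Some \<circ> ?t) :: 'a mat) * pmat n f = pmat n (ocomp (Some \<circ> ?t) f)"
      by (rule pmat_mult[OF ct])
    moreover have "(pmat n (ocomp (Some \<circ> ?t) f) :: 'a mat) * pmat n (Some \<circ> \<sigma>) = pmat n (ocomp (ocomp (Some \<circ> ?t) f) (Some \<circ> \<sigma>))"
      by (rule pmat_mult[OF closed_ocomp[OF ct cf]])
    ultimately show ?thesis by simp
  qed
  also have "\<dots> = pmat n g"
  proof (rule pmat_cong)
    fix i assume i: "i < n"
    have "g i = g (\<sigma> (?t i))" using st[OF i] by simp
    also have "\<dots> = map_option \<sigma> (f (?t i))" using comm[OF t_in[OF i]] .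
    finally show "ocomp (ocomp (Some \<circ> ?t) f) (Some \<circ> \<sigma>) i = g i"
      by (cases "f (?t i)") (auto simp: ocomp_def)
  qed
  finally show ?thesis
    by (intro similar_mat_witI[OF PQ QP]) auto
qed

lemma pmat_similar:
  assumes "bij_betw \<sigma> {..<n} {..<n}" "closed n f"
    "\<And>x. x < n \<Longrightarrow> g (\<sigma> x) = map_option \<sigma> (f x)"
  shows "similar_mat (pmat n g :: 'a :: semiring_1 mat) (pmat n f)"
  using pmat_similar_wit[OF assms] unfolding similar_mat_def by blast



lemma pmat_kernel_dim:
  assumes cl: "closed n h"
    and inj: "\<And>x y z. x < n \<Longrightarrow> y < n \<Longrightarrow> h x = Some z \<Longrightarrow> h y = Some z \<Longrightarrow> x = y"
  shows "kernel.dim n (pmat n h :: 'a :: field mat) = n - card {x. x < n \<and> h x \<noteq> None}"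
proof -
  define K where "K x = (case h x of Some y \<Rightarrow> y | None \<Rightarrow> n + x)" for x
  have hlt: "\<And>x y. x < n \<Longrightarrow> h x = Some y \<Longrightarrow> y < n" using cl unfolding closed_def by blast
  have injK: "inj_on K {..<n}"
  proof (rule inj_onI)
    fix x y assume x: "x \<in> {..<n}" and y: "y \<in> {..<n}" and e: "K x = K y"
    show "x = y"
    proof (cases "h x")
      case None note hx = this
      show ?thesis
      proof (cases "h y")
        case None thus ?thesis using e hx by (simp add: K_def)
      next
        case (Some z) thus ?thesis using e hx hlt[of y z] y by (simp add: K_def)
      qed
    next
      case (Some z) note hx = this
      show ?thesis
      proof (cases "h y")
        case None thus ?thesis using e hx hlt[of x z] x by (simp add: K_def)
      next
        case (Some z') thus ?thesis using e hx inj[of x y z] x y by (simp add: K_def)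
      qed
    qed
  qed
  define \<rho> where "\<rho> = rk n K"
  have bij: "bij_betw \<rho> {..<n} {..<n}" unfolding \<rho>_def by (rule rk_bij[OF injK])
  define \<tau> where "\<tau> = the_inv_into {..<n} \<rho>"
  have inj\<rho>: "inj_on \<rho> {..<n}" and img: "\<rho> ` {..<n} = {..<n}" using bij by (auto simp: bij_betw_def)
  have t_in: "\<And>i. i < n \<Longrightarrow> \<tau> i < n" using the_inv_into_into[OF inj\<rho>] img unfolding \<tau>_def by auto
  have st: "\<And>i. i < n \<Longrightarrow> \<rho> (\<tau> i) = i" using f_the_inv_into_f[OF inj\<rho>] img unfolding \<tau>_def by auto
  have ts: "\<And>i. i < n \<Longrightarrow> \<tau> (\<rho> i) = i" using the_inv_into_f_f[OF inj\<rho>] unfolding \<tau>_def by auto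
  have s_in: "\<And>i. i < n \<Longrightarrow> \<rho> i < n" using img by auto
  have ct: "closed n (Some \<circ> \<tau>)" using t_in unfolding closed_def by auto
  have cs: "closed n (Some \<circ> \<rho>)" using s_in unfolding closed_def by auto
  have CB: "(pmat n (Some \<circ> \<rho>) :: 'a mat) * pmat n (Some \<circ> \<tau>) = 1\<^sub>m n"
  proof -
    have "(pmat n (Some \<circ> \<rho>) :: 'a mat) * pmat n (Some \<circ> \<tau>) = pmat n (ocomp (Some \<circ> \<rho>) (Some \<circ> \<tau>))"
      by (rule pmat_mult[OF cs])
    also have "\<dots> = pmat n Some" by (rule pmat_cong) (simp add: ocomp_def ts)
    finally show ?thesis by (simp add: pmat_id)
  qed
  define M where "M = (pmat n (Some \<circ> \<tau>) :: 'a mat) * pmat n h"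
  have M: "M = pmat n (h \<circ> \<tau>)"
  proof -
    have "M = pmat n (ocomp (Some \<circ> \<tau>) h)" unfolding M_def by (rule pmat_mult[OF ct])
    also have "\<dots> = pmat n (h \<circ> \<tau>)" by (rule pmat_cong) (simp add: ocomp_def)
    finally show ?thesis .
  qed
  have ker: "mat_kernel M = mat_kernel (pmat n h :: 'a mat)"
    unfolding M_def by (rule mat_kernel_mult_eq[OF pmat_carrier pmat_carrier pmat_carrier CB])
  have Mc: "M \<in> carrier_mat n n" unfolding M by simp
  have Kmono: "\<And>i i'. i < n \<Longrightarrow> i' < n \<Longrightarrow> i < i' \<Longrightarrow> K (\<tau> i) < K (\<tau> i')"
  proof -
    fix i i' assume "i < n" "i' < n" "i < i'"
    thus "K (\<tau> i) < K (\<tau> i')"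
      using rk_mono_iff[OF injK t_in t_in, of i i'] st unfolding \<rho>_def by simp
  qed
  define p where "p i = (case h (\<tau> i) of Some y \<Rightarrow> y | None \<Rightarrow> n)" for i
  have piv: "pivot_fun M p n"
  proof (rule pivot_funI)
    show "dim_row M = n" using Mc by simp
  next
    fix i assume i: "i < n"
    show "p i \<le> n" using hlt[OF t_in[OF i]] by (cases "h (\<tau> i)") (auto simp: p_def)
  next
    fix i j assume i: "i < n" and j: "j < p i"
    show "M $$ (i, j) = 0"
    proof (cases "h (\<tau> i)")
      case None thus ?thesis using i j unfolding M p_def by (auto)
    next
      case (Some y) thus ?thesis using i j hlt[OF t_in[OF i]] unfolding M p_def by auto
    qed
  next
    fix i assume i: "i < n" and si: "Suc i < n"
    show "p i < p (Suc i) \<or> p (Suc i) = n"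
    proof (cases "h (\<tau> (Suc i))")
      case None thus ?thesis by (simp add: p_def)
    next
      case (Some y')
      have lt: "K (\<tau> i) < K (\<tau> (Suc i))" using Kmono[OF i si] by simp
      hence "K (\<tau> i) < y'" using Some by (simp add: K_def)
      moreover have "y' < n" using hlt[OF t_in[OF si] Some] .
      ultimately obtain y where hy: "h (\<tau> i) = Some y" and "y < y'"
        by (cases "h (\<tau> i)") (auto simp: K_def)
      thus ?thesis using Some by (simp add: p_def)
    qed
  next
    fix i assume i: "i < n" and pi: "p i < n"
    then obtain y where hy: "h (\<tau> i) = Some y" and py: "p i = y"
      by (cases "h (\<tau> i)") (auto simp: p_def)
    show "M $$ (i, p i) = 1" using i hy py hlt[OF t_in[OF i] hy] unfolding M by simp
    fix i' assume i': "i' < n" "i' \<noteq> i"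
    have "h (\<tau> i') \<noteq> Some y"
    proof
      assume "h (\<tau> i') = Some y"
      hence "\<tau> i' = \<tau> i" using inj[OF t_in[OF i'(1)] t_in[OF i]] hy by blast
      hence "i' = i" using st i i'(1) by metis
      thus False using i' by simp
    qed
    thus "M $$ (i', p i) = 0" using i' py hlt[OF t_in[OF i] hy] unfolding M by simp
  qed
  have ref: "row_echelon_form M" unfolding row_echelon_form_def using piv Mc by auto
  have "kernel.dim n M = n - card {i. i < n \<and> row M i \<noteq> 0\<^sub>v n}"
    using find_base_vectors(6)[OF ref Mc] .
  also have "{i. i < n \<and> row M i \<noteq> 0\<^sub>v n} = {i. i < n \<and> h (\<tau> i) \<noteq> None}"
  proof (intro Collect_cong conj_cong refl)
    fix i assume i: "i < n"
    show "(row M i \<noteq> 0\<^sub>v n) = (h (\<tau> i) \<noteq> None)"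
    proof (cases "h (\<tau> i)")
      case None
      have "row M i = 0\<^sub>v n" using i None unfolding M by (intro eq_vecI) auto
      thus ?thesis using None by simp
    next
      case (Some y)
      have y: "y < n" using hlt[OF t_in[OF i] Some] .
      have "row M i $ y = 1" using i y Some unfolding M by simp
      hence "row M i \<noteq> 0\<^sub>v n" using y by auto
      thus ?thesis using Some by simp
    qed
  qed
  also have "card {i. i < n \<and> h (\<tau> i) \<noteq> None} = card {x. x < n \<and> h x \<noteq> None}"
  proof -
    have "\<rho> ` {x. x < n \<and> h x \<noteq> None} = {i. i < n \<and> h (\<tau> i) \<noteq> None}"
    proof (intro equalityI subsetI)
      fix i assume "i \<in> \<rho> ` {x. x < n \<and> h x \<noteq> None}"
      then obtain x where x: "x < n" "h x \<noteq> None" "i = \<rho> x" by auto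
      thus "i \<in> {i. i < n \<and> h (\<tau> i) \<noteq> None}" using s_in ts by auto
    next
      fix i assume "i \<in> {i. i < n \<and> h (\<tau> i) \<noteq> None}"
      hence i: "i < n" "h (\<tau> i) \<noteq> None" by auto
      thus "i \<in> \<rho> ` {x. x < n \<and> h x \<noteq> None}" using st[OF i(1)] t_in[OF i(1)]
        by (metis (mono_tags, lifting) image_eqI mem_Collect_eq)
    qed
    moreover have "inj_on \<rho> {x. x < n \<and> h x \<noteq> None}" using inj\<rho> by (rule inj_on_subset) auto
    hence "card (\<rho> ` {x. x < n \<and> h x \<noteq> None}) = card {x. x < n \<and> h x \<noteq> None}" by (rule card_image)
    ultimately show ?thesis by simp
  qed
  finally show ?thesis unfolding ker .
qed



lemma pmat_jordan_exists:
  fixes K :: "nat \<Rightarrow> int"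
  assumes cl: "closed n f" and injK: "inj_on K {..<n}"
    and inc: "\<And>x y. x < n \<Longrightarrow> f x = Some y \<Longrightarrow> K x < K y"
  shows "\<exists>n_as. jordan_nf (pmat n f :: 'a :: field mat) n_as"
proof -
  define \<sigma> where "\<sigma> = rk n K"
  have bij: "bij_betw \<sigma> {..<n} {..<n}" unfolding \<sigma>_def by (rule rk_bij[OF injK])
  define \<tau> where "\<tau> = the_inv_into {..<n} \<sigma>"
  have inj\<sigma>: "inj_on \<sigma> {..<n}" and img: "\<sigma> ` {..<n} = {..<n}" using bij by (auto simp: bij_betw_def)
  have t_in: "\<And>i. i < n \<Longrightarrow> \<tau> i < n" using the_inv_into_into[OF inj\<sigma>] img unfolding \<tau>_def by auto
  have st: "\<And>i. i < n \<Longrightarrow> \<sigma> (\<tau> i) = i" using f_the_inv_into_f[OF inj\<sigma>] img unfolding \<tau>_def by auto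
  have ts: "\<And>i. i < n \<Longrightarrow> \<tau> (\<sigma> i) = i" using the_inv_into_f_f[OF inj\<sigma>] unfolding \<tau>_def by auto
  have s_in: "\<And>i. i < n \<Longrightarrow> \<sigma> i < n" using img by auto
  have hlt: "\<And>x y. x < n \<Longrightarrow> f x = Some y \<Longrightarrow> y < n" using cl unfolding closed_def by blast
  define g where "g i = (if i < n then map_option \<sigma> (f (\<tau> i)) else None)" for i
  have comm: "\<And>x. x < n \<Longrightarrow> g (\<sigma> x) = map_option \<sigma> (f x)"
    unfolding g_def using s_in ts by simp
  have sim: "similar_mat (pmat n g :: 'a mat) (pmat n f)" by (rule pmat_similar[OF bij cl comm])
  have ut: "upper_triangular (pmat n g :: 'a mat)"
    unfolding upper_triangular_def
  proof (intro allI impI)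
    fix i j assume i: "i < dim_row (pmat n g :: 'a mat)" and j: "j < i"
    hence i': "i < n" by simp
    have "g i \<noteq> Some j"
    proof
      assume e: "g i = Some j"
      then obtain y where fy: "f (\<tau> i) = Some y" and jy: "j = \<sigma> y" using i' by (auto simp: g_def)
      have "K (\<tau> i) < K y" using inc[OF t_in[OF i'] fy] .
      hence "\<sigma> (\<tau> i) < \<sigma> y" unfolding \<sigma>_def using rk_mono_iff[OF injK t_in[OF i'] hlt[OF t_in[OF i'] fy]] by simp
      thus False using st[OF i'] jy j by simp
    qed
    thus "pmat n g $$ (i, j) = (0 :: 'a)" using i' j by simp
  qed
  from triangular_to_jnf_vector[OF pmat_carrier ut]
  have "jordan_nf (pmat n g :: 'a mat) (triangular_to_jnf_vector (pmat n g :: 'a mat))" .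
  hence "jordan_nf (pmat n f :: 'a mat) (triangular_to_jnf_vector (pmat n g :: 'a mat))"
    unfolding jordan_nf_def using similar_mat_trans[OF similar_mat_sym[OF sim]] by blast
  thus ?thesis by blast
qed

lemma iter_inj:
  assumes cl: "closed n f" and inj: "\<And>x y z. x < n \<Longrightarrow> y < n \<Longrightarrow> f x = Some z \<Longrightarrow> f y = Some z \<Longrightarrow> x = y"
  shows "x < n \<Longrightarrow> y < n \<Longrightarrow> iter f k x = Some z \<Longrightarrow> iter f k y = Some z \<Longrightarrow> x = y"
proof (induct k arbitrary: z)
  case 0 thus ?case by simp
next
  case (Suc k)
  from Suc.prems(3) obtain u where u: "iter f k x = Some u" "f u = Some z"
    by (cases "iter f k x") (auto simp: ocomp_def)
  from Suc.prems(4) obtain v where v: "iter f k y = Some v" "f v = Some z"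
    by (cases "iter f k y") (auto simp: ocomp_def)
  have "u < n" using closed_iter[OF cl, of k] Suc.prems(1) u(1) unfolding closed_def by blast
  moreover have "v < n" using closed_iter[OF cl, of k] Suc.prems(2) v(1) unfolding closed_def by blast
  ultimately have "u = v" using inj u(2) v(2) by blast
  thus ?case using Suc.hyps[OF Suc.prems(1,2)] u(1) v(1) by blast
qed

lemma sum_list_fst_filter:
  "sum_list (map fst (xs :: (nat \<times> 'b) list)) = sum_list (map fst (filter P xs)) + sum_list (map fst (filter (\<lambda>x. \<not> P x) xs))"
  by (induct xs) auto

lemma count_fst_zero:
  assumes "\<And>p. p \<in> set xs \<Longrightarrow> snd p = (0::'a::zero)"
  shows "count_list (map fst xs) s = length (filter ((=) (s, 0)) xs)"
  using assms
proof (induct xs)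
  case (Cons p xs)
  obtain a b where p: "p = (a, b)" by force
  have "b = 0" using Cons.prems p by force
  thus ?case using Cons p by auto
qed simp

lemma sum_min_diff: "sum_list (map (min k) ls) + (\<Sum>s\<leftarrow>ls. s - k) = sum_list (ls :: nat list)"
  by (induct ls) auto

lemma pmat_shape:
  fixes K :: "nat \<Rightarrow> int"
  assumes cl: "closed n f"
    and inj: "\<And>x y z. x < n \<Longrightarrow> y < n \<Longrightarrow> f x = Some z \<Longrightarrow> f y = Some z \<Longrightarrow> x = y"
    and injK: "inj_on K {..<n}"
    and inc: "\<And>x y. x < n \<Longrightarrow> f x = Some y \<Longrightarrow> K x < K y"
    and pos: "\<And>s. s \<in> set ls \<Longrightarrow> s > 0"
    and cnt: "\<And>k. card {x. x < n \<and> iter f k x \<noteq> None} = (\<Sum>s\<leftarrow>ls. s - k)"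
  shows "\<exists>n_as. jordan_nf (pmat n f :: 'a :: field mat) n_as \<and> mset (map fst n_as) = mset ls"
proof -
  obtain n_as where jnf: "jordan_nf (pmat n f :: 'a mat) n_as"
    using pmat_jordan_exists[OF cl injK inc] by blast
  have sumls: "sum_list ls = n" using cnt[of 0] by simp
  have D: "dim_gen_eigenspace (pmat n f :: 'a mat) 0 k = sum_list (map (min k) ls)" for k
  proof -
    have cm: "char_matrix (pmat n f :: 'a mat) 0 = pmat n f"
      unfolding char_matrix_def by (intro eq_matI) auto
    have "dim_gen_eigenspace (pmat n f :: 'a mat) 0 k = kernel_dim ((pmat n f :: 'a mat) ^\<^sub>m k)"
      unfolding dim_gen_eigenspace_def cm ..
    also have "\<dots> = kernel_dim (pmat n (iter f k) :: 'a mat)" unfolding pmat_pow[OF cl] ..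
    also have "\<dots> = kernel.dim n (pmat n (iter f k) :: 'a mat)" unfolding kernel_dim_def by simp
    also have "\<dots> = n - card {x. x < n \<and> iter f k x \<noteq> None}"
      by (rule pmat_kernel_dim[OF closed_iter[OF cl] iter_inj[OF cl inj]])
    also have "\<dots> = sum_list (map (min k) ls)" unfolding cnt using sum_min_diff[of k ls] sumls by simp
    finally show ?thesis .
  qed
  define J where "J = map (\<lambda>s. (s, 0::'a)) ls"
  have "0 \<notin> set ls" using pos by blast
  hence jJ: "jordan_nf (jordan_matrix J) J"
    unfolding jordan_nf_def J_def by (auto intro: similar_mat_refl[OF jordan_matrix_carrier])
  have DJ: "dim_gen_eigenspace (jordan_matrix J) 0 k = sum_list (map (min k) ls)" for k
    unfolding dim_gen_eigenspace_jordan_matrix J_def by (simp add: o_def case_prod_beta)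
  have dims: "sum_list (map fst n_as) = n"
  proof -
    from jnf[unfolded jordan_nf_def] have "similar_mat (pmat n f :: 'a mat) (jordan_matrix n_as)" by auto
    from similar_matD[OF this] obtain m where "(pmat n f :: 'a mat) \<in> carrier_mat m m" "jordan_matrix n_as \<in> carrier_mat m m" by blast
    thus ?thesis by (metis carrier_matD(1) jordan_matrix_dim(1) pmat_dim(1))
  qed
  have ev0: "\<And>p. p \<in> set n_as \<Longrightarrow> snd p = 0"
  proof (rule ccontr)
    fix p assume p: "p \<in> set n_as" and ne: "snd p \<noteq> 0"
    have "fst p \<noteq> 0" using jnf p unfolding jordan_nf_def by auto
    hence pos2: "sum_list (map fst (filter (\<lambda>x. \<not> snd x = 0) n_as)) > 0"
      using p ne by (induct n_as) auto
    have le: "sum_list (map (min n) (map fst [(s, e)\<leftarrow>n_as . e = 0])) \<le> sum_list (map fst (filter (\<lambda>x. snd x = 0) n_as))"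
      by (induct n_as) (auto simp: split_beta)
    have "dim_gen_eigenspace (pmat n f :: 'a mat) 0 n = sum_list (map (min n) (map fst [(s, e)\<leftarrow>n_as . e = 0]))"
      using dim_gen_eigenspace[OF jnf] by simp
    moreover have "sum_list (map (min n) ls) = n"
    proof -
      have "\<And>s. s \<in> set ls \<Longrightarrow> s \<le> n" using sumls member_le_sum_list[of _ ls] by simp
      hence "map (min n) ls = ls" by (induct ls) auto
      thus ?thesis using sumls by simp
    qed
    ultimately have "sum_list (map (min n) (map fst [(s, e)\<leftarrow>n_as . e = 0])) = n" using D by simp
    hence "sum_list (map fst (filter (\<lambda>x. snd x = 0) n_as)) \<ge> n" using le by simp
    thus False using sum_list_fst_filter[of n_as "\<lambda>x. snd x = 0"] dims pos2 by simp
  qed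
  have cnts: "length (filter ((=) (k, 0)) n_as) = length (filter ((=) (k, 0)) J)" if k: "k \<noteq> 0" for k
  proof -
    have "length (filter ((=) (k, 0)) n_as) = compute_nr_of_jordan_blocks (pmat n f :: 'a mat) 0 k"
      using compute_nr_of_jordan_blocks[OF jnf k] by simp
    also have "\<dots> = compute_nr_of_jordan_blocks (jordan_matrix J) 0 k"
      unfolding compute_nr_of_jordan_blocks_def D DJ ..
    also have "\<dots> = length (filter ((=) (k, 0)) J)"
      using compute_nr_of_jordan_blocks[OF jJ k] by simp
    finally show ?thesis .
  qed
  have "mset (map fst n_as) = mset ls"
  proof (rule multiset_eqI)
    fix s
    show "count (mset (map fst n_as)) s = count (mset ls) s"
    proof (cases "s = 0")
      case True
      have "s \<notin> set (map fst n_as)" using jnf True unfolding jordan_nf_def by auto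
      moreover have "s \<notin> set ls" using pos True by auto
      ultimately show ?thesis by (metis count_mset_0_iff set_mset_mset)
    next
      case False
      have "count (mset (map fst n_as)) s = length (filter ((=) (s, 0)) n_as)"
        unfolding count_mset using count_fst_zero[of n_as s, OF ev0] by simp
      also have "\<dots> = length (filter ((=) (s, 0)) J)" using cnts[OF False] .
      also have "\<dots> = count (mset ls) s"
      proof -
        have "map fst J = ls" unfolding J_def by (induct ls) auto
        moreover have "\<And>p. p \<in> set J \<Longrightarrow> snd p = 0" unfolding J_def by auto
        ultimately show ?thesis unfolding count_mset using count_fst_zero[of J s] by metis
      qed
      finally show ?thesis .
    qed
  qed
  with jnf show ?thesis by blast
qed



definition jsucc :: "nat \<Rightarrow> nat \<Rightarrow> nat \<Rightarrow> nat option" where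
  "jsucc p q x = (if Suc x < p + q \<and> Suc x \<noteq> p then Some (Suc x) else None)"

lemma jordan_matrix_two: "(jordan_matrix [(p, 0), (q, 0)] :: 'a :: semiring_1 mat) = pmat (p + q) (jsucc p q)"
proof (intro eq_matI)
  fix i j assume i: "i < dim_row (pmat (p + q) (jsucc p q) :: 'a mat)" and j: "j < dim_col (pmat (p + q) (jsucc p q) :: 'a mat)"
  hence i': "i < p + q" and j': "j < p + q" by auto
  show "(jordan_matrix [(p, 0), (q, 0)] :: 'a mat) $$ (i, j) = pmat (p + q) (jsucc p q) $$ (i, j)"
    using i' j' unfolding jordan_matrix_def jsucc_def
    by (auto simp: Let_def jordan_block_def)
qed auto



lemma jsucc_swap_similar:
  "similar_mat (pmat (l1 + l2) (jsucc l1 l2) :: 'a :: semiring_1 mat) (pmat (l1 + l2) (jsucc l2 l1))"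
proof (rule pmat_similar)
  define \<sigma> where "\<sigma> x = (if x < l2 then l1 + x else x - l2)" for x
  define \<tau> where "\<tau> y = (if y < l1 then y + l2 else y - l1)" for y
  show "bij_betw \<sigma> {..<l1 + l2} {..<l1 + l2}"
    by (rule bij_betw_byWitness[of _ \<tau>]) (auto simp: \<sigma>_def \<tau>_def)
  show "closed (l1 + l2) (jsucc l2 l1)" unfolding closed_def jsucc_def by auto
  fix x assume "x < l1 + l2"
  thus "jsucc l1 l2 (\<sigma> x) = map_option \<sigma> (jsucc l2 l1 x)"
    unfolding \<sigma>_def jsucc_def by auto
qed

lemma all_ev_zero:
  assumes jnf: "jordan_nf (A :: 'a :: field mat) n_as" and A: "A \<in> carrier_mat n n"
    and D: "dim_gen_eigenspace A 0 k = n"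
  shows "\<And>p. p \<in> set n_as \<Longrightarrow> snd p = 0"
proof (rule ccontr)
  fix p assume p: "p \<in> set n_as" and ne: "snd p \<noteq> 0"
  have dims: "sum_list (map fst n_as) = n"
  proof -
    from jnf[unfolded jordan_nf_def] have "similar_mat A (jordan_matrix n_as)" by auto
    from similar_matD[OF this] obtain m where "A \<in> carrier_mat m m" "jordan_matrix n_as \<in> carrier_mat m m" by blast
    thus ?thesis using A by (metis carrier_matD(1) jordan_matrix_dim(1))
  qed
  have "fst p \<noteq> 0" using jnf p unfolding jordan_nf_def by auto
  hence pos2: "sum_list (map fst (filter (\<lambda>x. \<not> snd x = 0) n_as)) > 0"
    using p ne by (induct n_as) auto
  have le: "sum_list (map (min k) (map fst [(s, e)\<leftarrow>n_as . e = 0])) \<le> sum_list (map fst (filter (\<lambda>x. snd x = 0) n_as))"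
    by (induct n_as) (auto simp: split_beta)
  have "sum_list (map (min k) (map fst [(s, e)\<leftarrow>n_as . e = 0])) = n"
    using dim_gen_eigenspace[OF jnf] D by simp
  hence "sum_list (map fst (filter (\<lambda>x. snd x = 0) n_as)) \<ge> n" using le by simp
  thus False using sum_list_fst_filter[of n_as "\<lambda>x. snd x = 0"] dims pos2 by simp
qed

lemma B_similar:
  fixes B :: "'a :: field mat"
  assumes B: "B \<in> carrier_mat n n" "nilpotent_mat B"
    and shB: "has_shape B {#l1, l2#}" and n: "n = l1 + l2"
  shows "similar_mat B (pmat n (jsucc l1 l2))"
proof -
  obtain n_as where jnf: "jordan_nf B n_as" and ms: "mset (map fst n_as) = {#l1, l2#}"
    using shB unfolding has_shape_def by blast
  obtain k where Bk: "B ^\<^sub>m k = 0\<^sub>m n n" using B unfolding nilpotent_mat_def by auto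
  have "dim_gen_eigenspace B 0 k = n"
  proof -
    have cm: "char_matrix B 0 = B" unfolding char_matrix_def using B(1) by (intro eq_matI) auto
    have "dim_gen_eigenspace B 0 k = kernel_dim (0\<^sub>m n n :: 'a mat)"
      unfolding dim_gen_eigenspace_def cm Bk ..
    also have "\<dots> = kernel.dim n (pmat n (\<lambda>_. None) :: 'a mat)" unfolding kernel_dim_def pmat_none by simp
    also have "\<dots> = n - card {x. x < n \<and> (None :: nat option) \<noteq> None}"
      by (rule pmat_kernel_dim) (auto simp: closed_def)
    finally show ?thesis by simp
  qed
  note ev0 = all_ev_zero[OF jnf B(1) this]
  have "length (map fst n_as) = 2" using arg_cong[OF ms, of size] by simp
  hence "length n_as = 2" by simp
  then obtain x y where "n_as = [x, y]"
    by (metis (no_types) length_0_conv length_Suc_conv numeral_2_eq_2)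
  then obtain p e1 q e2 where nas: "n_as = [(p, e1), (q, e2)]"
    by (metis surjective_pairing)
  have e: "e1 = 0" "e2 = 0" using ev0[of "(p,e1)"] ev0[of "(q,e2)"] nas by auto
  have pq: "{#p, q#} = {#l1, l2#}" using ms nas by simp
  have sim: "similar_mat B (pmat (p + q) (jsucc p q))"
    using jnf unfolding jordan_nf_def nas e jordan_matrix_two by simp
  show ?thesis
  proof (cases "p = l1")
    case True
    hence "q = l2" using pq by (simp add: add_mset_commute)
    thus ?thesis using sim True n by simp
  next
    case False
    hence "p = l2" "q = l1" using pq by (auto simp: add_eq_conv_ex)
    hence sim': "similar_mat B (pmat (l2 + l1) (jsucc l2 l1))" using sim by simp
    have "similar_mat B (pmat (l2 + l1) (jsucc l1 l2))" by (rule similar_mat_trans[OF sim' jsucc_swap_similar])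
    thus ?thesis using n by (simp add: add.commute)
  qed
qed



lemma shapes_NB_intro:
  fixes B :: "'a :: field mat" and K :: "nat \<Rightarrow> int"
  assumes simB: "similar_mat B (pmat n s0)"
    and cl: "closed n f" and cls: "closed n s0"
    and inj: "\<And>x y z. x < n \<Longrightarrow> y < n \<Longrightarrow> f x = Some z \<Longrightarrow> f y = Some z \<Longrightarrow> x = y"
    and injK: "inj_on K {..<n}"
    and inc: "\<And>x y. x < n \<Longrightarrow> f x = Some y \<Longrightarrow> K x < K y"
    and comm: "\<And>x. x < n \<Longrightarrow> ocomp f s0 x = ocomp s0 f x"
    and pos: "\<And>s. s \<in> set ls \<Longrightarrow> s > 0"
    and cnt: "\<And>k. card {x. x < n \<and> iter f k x \<noteq> None} = (\<Sum>s\<leftarrow>ls. s - k)"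
  shows "mset ls \<in> shapes_NB n B"
proof -
  obtain P Q where wit: "similar_mat_wit B (pmat n s0) P Q" using simB unfolding similar_mat_def by blast
  have Bc: "B \<in> carrier_mat n n" using wit unfolding similar_mat_wit_def Let_def
    by (metis carrier_matD(1) carrier_matI insert_subset pmat_dim(1) pmat_dim(2))
  note D = similar_mat_witD2[OF Bc wit]
  have PQ: "P * Q = 1\<^sub>m n" and QP: "Q * P = 1\<^sub>m n"
    and BPQ: "B = P * pmat n s0 * Q" and P: "P \<in> carrier_mat n n" and Q: "Q \<in> carrier_mat n n"
    using D(1) D(2) D(3) D(6) D(7) .
  define F where "F = (pmat n f :: 'a mat)"
  define S where "S = (pmat n s0 :: 'a mat)"
  have F: "F \<in> carrier_mat n n" and S: "S \<in> carrier_mat n n" unfolding F_def S_def by auto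
  define A where "A = P * F * Q"
  have A: "A \<in> carrier_mat n n" unfolding A_def using P F Q by auto
  have FS: "F * S = S * F"
  proof -
    have "F * S = pmat n (ocomp f s0)" unfolding F_def S_def by (rule pmat_mult[OF cl])
    also have "\<dots> = pmat n (ocomp s0 f)" by (rule pmat_cong[OF comm])
    also have "\<dots> = S * F" unfolding F_def S_def by (rule pmat_mult[OF cls, symmetric])
    finally show ?thesis .
  qed
  have AB: "A * B = B * A"
  proof -
    have "A * B = P * F * (Q * P) * S * Q" unfolding A_def BPQ S_def[symmetric]
      using P F Q S by (simp add: assoc_mult_mat[of _ n n _ n _ n])
    also have "\<dots> = P * (F * S) * Q" unfolding QP using P F Q S by (simp add: assoc_mult_mat[of _ n n _ n _ n])
    also have "\<dots> = P * (S * F) * Q" unfolding FS ..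
    also have "\<dots> = P * S * (Q * P) * F * Q" unfolding QP using P F Q S by (simp add: assoc_mult_mat[of _ n n _ n _ n])
    also have "\<dots> = B * A" unfolding A_def BPQ S_def[symmetric]
      using P F Q S by (simp add: assoc_mult_mat[of _ n n _ n _ n])
    finally show ?thesis .
  qed
  have witA: "similar_mat_wit A F P Q" unfolding A_def by (rule similar_mat_witI[OF PQ QP refl _ F P Q]) (use P F Q in auto)
  have sumls: "sum_list ls = n" using cnt[of 0] by simp
  have nil: "nilpotent_mat A"
  proof -
    have "card {x. x < n \<and> iter f n x \<noteq> None} = 0"
    proof -
      have "\<And>s. s \<in> set ls \<Longrightarrow> s \<le> n" using sumls member_le_sum_list[of _ ls] by simp
      hence "(\<Sum>s\<leftarrow>ls. s - n) = 0" by (induct ls) auto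
      thus ?thesis using cnt[of n] by simp
    qed
    hence "{x. x < n \<and> iter f n x \<noteq> None} = {}" by simp
    hence "F ^\<^sub>m n = 0\<^sub>m n n" unfolding F_def pmat_pow[OF cl] pmat_none[symmetric]
      by (intro pmat_cong) auto
    hence "A ^\<^sub>m n = 0\<^sub>m n n" using similar_mat_wit_pow_id[OF witA, of n] P Q by simp
    thus ?thesis unfolding nilpotent_mat_def using A by auto
  qed
  have "\<exists>n_as. jordan_nf (pmat n f :: 'a mat) n_as \<and> mset (map fst n_as) = mset ls"
    using cl inj injK inc pos cnt by (rule pmat_shape)
  then obtain n_as where jnf: "jordan_nf F n_as" and ms: "mset (map fst n_as) = mset ls"
    unfolding F_def by blast
  have "jordan_nf A n_as" using jnf unfolding jordan_nf_def
    using similar_mat_trans[of A F] witA unfolding similar_mat_def by blast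
  hence "has_shape A (mset ls)" unfolding has_shape_def using ms by blast
  thus ?thesis unfolding shapes_NB_def using A AB nil by blast
qed



definition fab :: "nat \<Rightarrow> nat \<Rightarrow> nat \<Rightarrow> nat \<Rightarrow> nat \<Rightarrow> nat option" where
  "fab l1 l2 a b x = (if x < l1 then (if x + a < l2 then Some (l1 + x + a) else None)
     else (if x - l1 + b < l1 then Some (x - l1 + b) else None))"

definition Kab :: "nat \<Rightarrow> nat \<Rightarrow> nat \<Rightarrow> nat \<Rightarrow> int" where
  "Kab l1 a b x = (if x < l1 then 4 * int x else 4 * (int x - int l1) + 2 * int b - 2 * int a + 1)"

context
  fixes l1 l2 a b :: nat
  assumes l21: "l2 \<le> l1" and bb: "l1 \<le> b + l2" and ab: "1 \<le> a + b"
begin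

lemma fab_closed: "closed (l1 + l2) (fab l1 l2 a b)"
  unfolding closed_def fab_def by auto

lemma fab_inj: "x < l1 + l2 \<Longrightarrow> y < l1 + l2 \<Longrightarrow> fab l1 l2 a b x = Some z \<Longrightarrow> fab l1 l2 a b y = Some z \<Longrightarrow> x = y"
  unfolding fab_def by (auto split: if_splits)

lemma Kab_inj: "inj_on (Kab l1 a b) {..<l1 + l2}"
proof (rule inj_onI)
  fix x y assume "x \<in> {..<l1 + l2}" "y \<in> {..<l1 + l2}" and e: "Kab l1 a b x = Kab l1 a b y"
  show "x = y"
  proof (cases "x < l1"; cases "y < l1")
    assume "x < l1" "y < l1" thus ?thesis using e by (simp add: Kab_def)
  next
    assume "x < l1" "\<not> y < l1"
    hence "4 * int x = 4 * (int y - int l1) + 2 * int b - 2 * int a + 1" using e by (simp add: Kab_def)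
    hence "4 * int x - 4 * (int y - int l1) - 2 * int b + 2 * int a = 1" by simp
    hence "2 * (2 * int x - 2 * (int y - int l1) - int b + int a) = 1" by simp
    thus ?thesis by presburger
  next
    assume "\<not> x < l1" "y < l1"
    hence "4 * int y = 4 * (int x - int l1) + 2 * int b - 2 * int a + 1" using e by (simp add: Kab_def)
    thus ?thesis by presburger
  next
    assume "\<not> x < l1" "\<not> y < l1" thus ?thesis using e by (simp add: Kab_def)
  qed
qed

lemma Kab_inc: "x < l1 + l2 \<Longrightarrow> fab l1 l2 a b x = Some y \<Longrightarrow> Kab l1 a b x < Kab l1 a b y"
  unfolding fab_def Kab_def using ab by (auto split: if_splits)

lemma fab_comm: "x < l1 + l2 \<Longrightarrow> ocomp (fab l1 l2 a b) (jsucc l1 l2) x = ocomp (jsucc l1 l2) (fab l1 l2 a b) x"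
  unfolding fab_def jsucc_def ocomp_def using l21 bb by auto

lemma fab2: "y < l1 + l2 \<Longrightarrow> ocomp (fab l1 l2 a b) (fab l1 l2 a b) y =
   (if y < l1 then (if y + (a + b) < l1 then Some (y + (a + b)) else None)
    else (if y + (a + b) < l1 + l2 then Some (y + (a + b)) else None))"
  unfolding ocomp_def fab_def using l21 bb by auto

lemma ocomp_assoc: "ocomp (ocomp g f) h x = ocomp g (ocomp f h) x"
  by (cases "g x") (auto simp: ocomp_def)

lemma iter_even:
  "x < l1 + l2 \<Longrightarrow> iter (fab l1 l2 a b) (2 * m) x =
     (if x < l1 then (if x + m * (a + b) < l1 then Some (x + m * (a + b)) else None)
      else (if x + m * (a + b) < l1 + l2 then Some (x + m * (a + b)) else None))"
proof (induct m)
  case 0 thus ?case by simp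
next
  case (Suc m)
  have e: "2 * Suc m = Suc (Suc (2 * m))" by simp
  have "iter (fab l1 l2 a b) (2 * Suc m) x = ocomp (iter (fab l1 l2 a b) (2 * m)) (ocomp (fab l1 l2 a b) (fab l1 l2 a b)) x"
    unfolding e iter.simps ocomp_assoc ..
  also have "\<dots> = (case iter (fab l1 l2 a b) (2 * m) x of None \<Rightarrow> None | Some y \<Rightarrow> ocomp (fab l1 l2 a b) (fab l1 l2 a b) y)"
    unfolding ocomp_def ..
  also have "\<dots> = (if x < l1 then (if x + Suc m * (a + b) < l1 then Some (x + Suc m * (a + b)) else None)
      else (if x + Suc m * (a + b) < l1 + l2 then Some (x + Suc m * (a + b)) else None))"
  proof (cases "x < l1")
    case True
    thus ?thesis using Suc fab2[of "x + m * (a + b)"] by (auto simp: algebra_simps)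
  next
    case False
    thus ?thesis using Suc fab2[of "x + m * (a + b)"] by (auto simp: algebra_simps)
  qed
  finally show ?case .
qed

lemma iter_odd:
  "x < l1 + l2 \<Longrightarrow> iter (fab l1 l2 a b) (Suc (2 * m)) x =
     (if x < l1 then (if x + m * (a + b) + a < l2 then Some (l1 + x + m * (a + b) + a) else None)
      else (if x + m * (a + b) + b < l1 + l1 then Some (x + m * (a + b) + b - l1) else None))"
proof -
  assume x: "x < l1 + l2"
  have "iter (fab l1 l2 a b) (Suc (2 * m)) x = (case iter (fab l1 l2 a b) (2 * m) x of None \<Rightarrow> None | Some y \<Rightarrow> fab l1 l2 a b y)"
    by (simp add: ocomp_def)
  thus ?thesis using iter_even[OF x, of m] l21 bb x by (auto simp: fab_def algebra_simps)
qed

lemma cnt_even: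
  "card {x. x < l1 + l2 \<and> iter (fab l1 l2 a b) (2 * m) x \<noteq> None} = (l1 - m * (a + b)) + (l2 - m * (a + b))"
proof -
  let ?c = "m * (a + b)"
  have "{x. x < l1 + l2 \<and> iter (fab l1 l2 a b) (2 * m) x \<noteq> None} = {..< l1 - ?c} \<union> {l1 ..< l1 + l2 - ?c}"
  proof (intro equalityI subsetI)
    fix x assume "x \<in> {x. x < l1 + l2 \<and> iter (fab l1 l2 a b) (2 * m) x \<noteq> None}"
    hence x: "x < l1 + l2" "iter (fab l1 l2 a b) (2 * m) x \<noteq> None" by auto
    show "x \<in> {..< l1 - ?c} \<union> {l1 ..< l1 + l2 - ?c}"
      using x(2) unfolding iter_even[OF x(1)] by (auto split: if_splits)
  next
    fix x assume x: "x \<in> {..< l1 - ?c} \<union> {l1 ..< l1 + l2 - ?c}"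
    hence x1: "x < l1 + l2" by auto
    show "x \<in> {x. x < l1 + l2 \<and> iter (fab l1 l2 a b) (2 * m) x \<noteq> None}"
      using x x1 unfolding mem_Collect_eq iter_even[OF x1] by auto
  qed
  moreover have "card ({..< l1 - ?c} \<union> {l1 ..< l1 + l2 - ?c}) = (l1 - ?c) + (l2 - ?c)"
    by (subst card_Un_disjoint) auto
  ultimately show ?thesis by simp
qed

lemma cnt_odd:
  "card {x. x < l1 + l2 \<and> iter (fab l1 l2 a b) (Suc (2 * m)) x \<noteq> None} = (l2 - a - m * (a + b)) + (l1 - b - m * (a + b))"
proof -
  let ?c = "m * (a + b)"
  have "{x. x < l1 + l2 \<and> iter (fab l1 l2 a b) (Suc (2 * m)) x \<noteq> None} = {..< l2 - a - ?c} \<union> {l1 ..< l1 + (l1 - b - ?c)}"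
  proof (intro equalityI subsetI)
    fix x assume "x \<in> {x. x < l1 + l2 \<and> iter (fab l1 l2 a b) (Suc (2 * m)) x \<noteq> None}"
    hence x: "x < l1 + l2" "iter (fab l1 l2 a b) (Suc (2 * m)) x \<noteq> None" by auto
    show "x \<in> {..< l2 - a - ?c} \<union> {l1 ..< l1 + (l1 - b - ?c)}"
      using x(2) unfolding iter_odd[OF x(1)] by (auto split: if_splits)
  next
    fix x assume x: "x \<in> {..< l2 - a - ?c} \<union> {l1 ..< l1 + (l1 - b - ?c)}"
    hence x1: "x < l1 + l2" using l21 bb by auto
    show "x \<in> {x. x < l1 + l2 \<and> iter (fab l1 l2 a b) (Suc (2 * m)) x \<noteq> None}"
      using x x1 l21 unfolding mem_Collect_eq iter_odd[OF x1] by auto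
  qed
  moreover have "card ({..< l2 - a - ?c} \<union> {l1 ..< l1 + (l1 - b - ?c)}) = (l2 - a - ?c) + (l1 - b - ?c)"
    using l21 by (subst card_Un_disjoint) auto
  ultimately show ?thesis by simp
qed

end



lemma sum3: "(\<Sum>s\<leftarrow>replicate \<alpha> p1 @ replicate \<beta> p2 @ replicate \<gamma> p3. s - t) = \<alpha> * (p1 - t) + \<beta> * (p2 - t) + \<gamma> * (p3 - t)"
  by (simp add: sum_list_replicate)

lemma int_eqD: "int x = int y \<Longrightarrow> x = y" by simp

lemma arith_a_even:
  fixes l1 l2 w k0 m :: nat
  assumes K1: "l2 \<le> k0 * w" and K2: "k0 * w < l1" and W: "l1 \<le> l2 + w" and k0: "k0 \<ge> 1"
  shows "(l1 - m * w) + (l2 - m * w) =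
    (l1 - k0 * w) * (2 * k0 + 1 - 2 * m) + (w + l2 - l1) * (2 * k0 - 2 * m) + (k0 * w - l2) * (2 * k0 - 1 - 2 * m)"
proof (cases "m < k0")
  case True
  then obtain e where e: "k0 = m + e + 1" by (metis add.commute less_imp_Suc_add Suc_eq_plus1 add.assoc)
  have KM: "k0 * w = m * w + (e + 1) * w" unfolding e by (simp add: algebra_simps)
  have Mle: "m * w \<le> l2" using KM K2 W by (simp add: algebra_simps)
  have f1: "2 * k0 + 1 - 2 * m = 2 * e + 3" "2 * k0 - 2 * m = 2 * e + 2" "2 * k0 - 1 - 2 * m = 2 * e + 1"
    using e by auto
  have i1: "int (l1 - k0 * w) = int l1 - int k0 * int w" using K2 by (simp add: of_nat_diff)
  have i2: "int (w + l2 - l1) = int w + int l2 - int l1" using W by (simp add: of_nat_diff)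
  have i3: "int (k0 * w - l2) = int k0 * int w - int l2" using K1 by (simp add: of_nat_diff)
  have i4: "int (l1 - m * w) = int l1 - int m * int w" using Mle K1 K2 by (simp add: of_nat_diff)
  have i5: "int (l2 - m * w) = int l2 - int m * int w" using Mle by (simp add: of_nat_diff)
  have ke: "int k0 = int m + int e + 1" using e by simp
  have "int ((l1 - k0 * w) * (2 * k0 + 1 - 2 * m) + (w + l2 - l1) * (2 * k0 - 2 * m) + (k0 * w - l2) * (2 * k0 - 1 - 2 * m))
     = (int l1 - int k0 * int w) * (2 * int e + 3) + (int w + int l2 - int l1) * (2 * int e + 2) + (int k0 * int w - int l2) * (2 * int e + 1)"
    unfolding f1 of_nat_add of_nat_mult i1 i2 i3 by simp
  also have "\<dots> = int l1 + int l2 - 2 * (int m * int w)"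
    unfolding ke by (simp add: algebra_simps)
  also have "\<dots> = int ((l1 - m * w) + (l2 - m * w))" unfolding of_nat_add i4 i5 by simp
  finally show ?thesis by (rule int_eqD[symmetric])
next
  case False
  show ?thesis
  proof (cases "m = k0")
    case True thus ?thesis using K1 K2 by simp
  next
    case False
    hence "m \<ge> k0 + 1" using \<open>\<not> m < k0\<close> by simp
    hence "m * w \<ge> (k0 + 1) * w" by (rule mult_le_mono1)
    hence "m * w \<ge> l1" using K1 W by (simp add: algebra_simps)
    moreover have "2 * k0 + 1 - 2 * m = 0" "2 * k0 - 2 * m = 0" "2 * k0 - 1 - 2 * m = 0" using \<open>m \<ge> k0 + 1\<close> by auto
    ultimately show ?thesis using K1 K2 by simp
  qed
qed


lemma arith_a_odd:
  fixes l1 l2 j l w k0 m :: nat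
  assumes l21: "l2 \<le> l1" and jl: "j \<le> l" and ll2: "l < l2" and wdef: "w = l + (l1 - l2 + j)"
    and K1: "l2 \<le> k0 * w" and K2: "k0 * w < l1" and k0: "k0 \<ge> 1"
  shows "(l2 - l - m * w) + (l1 - (l1 - l2 + j) - m * w) =
    (l1 - k0 * w) * (2 * k0 + 1 - Suc (2 * m)) + (w + l2 - l1) * (2 * k0 - Suc (2 * m)) + (k0 * w - l2) * (2 * k0 - 1 - Suc (2 * m))"
proof (cases "m < k0")
  case True
  then obtain e where e: "k0 = m + e + 1" by (metis add.commute less_imp_Suc_add Suc_eq_plus1 add.assoc)
  have KM: "k0 * w = m * w + (e + 1) * w" unfolding e by (simp add: algebra_simps)
  have "w \<le> (e + 1) * w" by simp
  hence Mle: "m * w + l + j \<le> l2" using KM K2 wdef l21 by linarith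
  have f1: "2 * k0 + 1 - Suc (2 * m) = 2 * e + 2" "2 * k0 - Suc (2 * m) = 2 * e + 1" "2 * k0 - 1 - Suc (2 * m) = 2 * e"
    using e by auto
  have iw: "int w = int l + int l1 - int l2 + int j" using wdef l21 by simp
  have i1: "int (l1 - k0 * w) = int l1 - int k0 * int w" using K2 by (simp add: of_nat_diff)
  have i2: "int (w + l2 - l1) = int w + int l2 - int l1" using wdef l21 by (simp add: of_nat_diff)
  have i3: "int (k0 * w - l2) = int k0 * int w - int l2" using K1 by (simp add: of_nat_diff)
  have i4: "int (l2 - l - m * w) = int l2 - int l - int m * int w" using Mle by (simp add: of_nat_diff)
  have i5: "int (l1 - (l1 - l2 + j) - m * w) = int l2 - int j - int m * int w" using Mle l21 by (simp add: of_nat_diff)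
  have ke: "int k0 = int m + int e + 1" using e by simp
  have "int ((l1 - k0 * w) * (2 * k0 + 1 - Suc (2 * m)) + (w + l2 - l1) * (2 * k0 - Suc (2 * m)) + (k0 * w - l2) * (2 * k0 - 1 - Suc (2 * m)))
     = (int l1 - int k0 * int w) * (2 * int e + 2) + (int w + int l2 - int l1) * (2 * int e + 1) + (int k0 * int w - int l2) * (2 * int e)"
    unfolding f1 of_nat_add of_nat_mult i1 i2 i3 by simp
  also have "\<dots> = 2 * int l2 - int l - int j - 2 * (int m * int w)"
    unfolding ke by (simp add: algebra_simps iw)
  also have "\<dots> = int ((l2 - l - m * w) + (l1 - (l1 - l2 + j) - m * w))" unfolding of_nat_add i4 i5 by simp
  finally show ?thesis by (rule int_eqD[symmetric])
next
  case False
  hence mk: "m * w \<ge> k0 * w" by (simp add: mult_le_mono1)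
  have z: "l2 - l - m * w = 0" "l1 - (l1 - l2 + j) - m * w = 0" using mk K1 l21 by linarith+
  have "2 * k0 + 1 - Suc (2 * m) = 0" "2 * k0 - Suc (2 * m) = 0" "2 * k0 - 1 - Suc (2 * m) = 0" using False by auto
  thus ?thesis unfolding z by simp
qed

lemma arith_b_even:
  fixes l1 l2 j l w k0 m :: nat
  assumes l21: "l2 \<le> l1" and jl: "j \<le> l" and ll2: "l < l2" and wdef: "w = l + (l1 - l2 + j)"
    and K1: "l1 - l \<le> k0 * w" and K2: "k0 * w + j < l2"
  shows "(l1 - m * w) + (l2 - m * w) =
    (l2 - k0 * w - j) * (2 * k0 + 2 - 2 * m) + (w + j - l) * (2 * k0 + 1 - 2 * m) + (k0 * w + l - l2) * (2 * k0 - 2 * m)"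
proof (cases "m \<le> k0")
  case True
  then obtain e where e: "k0 = m + e" using le_Suc_ex by blast
  have KM: "k0 * w = m * w + e * w" unfolding e by (simp add: algebra_simps)
  have Mle: "m * w \<le> l2" using KM K2 by simp
  have f1: "2 * k0 + 2 - 2 * m = 2 * e + 2" "2 * k0 + 1 - 2 * m = 2 * e + 1" "2 * k0 - 2 * m = 2 * e"
    using e by auto
  have iw: "int w = int l + int l1 - int l2 + int j" using wdef l21 by simp
  have i1: "int (l2 - k0 * w - j) = int l2 - int k0 * int w - int j" using K2 by (simp add: of_nat_diff)
  have i2: "int (w + j - l) = int w + int j - int l" using wdef l21 by (simp add: of_nat_diff)
  have i3: "int (k0 * w + l - l2) = int k0 * int w + int l - int l2" using K1 l21 by (simp add: of_nat_diff)
  have i4: "int (l1 - m * w) = int l1 - int m * int w" using Mle l21 by (simp add: of_nat_diff)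
  have i5: "int (l2 - m * w) = int l2 - int m * int w" using Mle by (simp add: of_nat_diff)
  have ke: "int k0 = int m + int e" using e by simp
  have "int ((l2 - k0 * w - j) * (2 * k0 + 2 - 2 * m) + (w + j - l) * (2 * k0 + 1 - 2 * m) + (k0 * w + l - l2) * (2 * k0 - 2 * m))
     = (int l2 - int k0 * int w - int j) * (2 * int e + 2) + (int w + int j - int l) * (2 * int e + 1) + (int k0 * int w + int l - int l2) * (2 * int e)"
    unfolding f1 of_nat_add of_nat_mult i1 i2 i3 by simp
  also have "\<dots> = int l1 + int l2 - 2 * (int m * int w)"
    unfolding ke by (simp add: algebra_simps iw)
  also have "\<dots> = int ((l1 - m * w) + (l2 - m * w))" unfolding of_nat_add i4 i5 by simp
  finally show ?thesis by (rule int_eqD[symmetric])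
next
  case False
  hence "m \<ge> k0 + 1" by simp
  hence "m * w \<ge> (k0 + 1) * w" by (rule mult_le_mono1)
  moreover have "(k0 + 1) * w = k0 * w + w" by simp
  ultimately have "m * w \<ge> l1" using K1 wdef by linarith
  moreover have "2 * k0 + 2 - 2 * m = 0" "2 * k0 + 1 - 2 * m = 0" "2 * k0 - 2 * m = 0" using False by auto
  ultimately show ?thesis using l21 by simp
qed

lemma arith_b_odd:
  fixes l1 l2 j l w k0 m :: nat
  assumes l21: "l2 \<le> l1" and jl: "j \<le> l" and ll2: "l < l2" and wdef: "w = l + (l1 - l2 + j)"
    and K1: "l1 - l \<le> k0 * w" and K2: "k0 * w + j < l2"
  shows "(l2 - l - m * w) + (l1 - (l1 - l2 + j) - m * w) =
    (l2 - k0 * w - j) * (2 * k0 + 2 - Suc (2 * m)) + (w + j - l) * (2 * k0 + 1 - Suc (2 * m)) + (k0 * w + l - l2) * (2 * k0 - Suc (2 * m))"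
proof (cases "m < k0")
  case True
  then obtain e where e: "k0 = m + e + 1" by (metis add.commute less_imp_Suc_add Suc_eq_plus1 add.assoc)
  have KM: "k0 * w = m * w + (e + 1) * w" unfolding e by (simp add: algebra_simps)
  have "w \<le> (e + 1) * w" by simp
  hence Mle: "m * w + l + j \<le> l2" using KM K2 wdef l21 by linarith
  have f1: "2 * k0 + 2 - Suc (2 * m) = 2 * e + 3" "2 * k0 + 1 - Suc (2 * m) = 2 * e + 2" "2 * k0 - Suc (2 * m) = 2 * e + 1"
    using e by auto
  have iw: "int w = int l + int l1 - int l2 + int j" using wdef l21 by simp
  have i1: "int (l2 - k0 * w - j) = int l2 - int k0 * int w - int j" using K2 by (simp add: of_nat_diff)
  have i2: "int (w + j - l) = int w + int j - int l" using wdef l21 by (simp add: of_nat_diff)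
  have i3: "int (k0 * w + l - l2) = int k0 * int w + int l - int l2" using K1 l21 by (simp add: of_nat_diff)
  have i4: "int (l2 - l - m * w) = int l2 - int l - int m * int w" using Mle by (simp add: of_nat_diff)
  have i5: "int (l1 - (l1 - l2 + j) - m * w) = int l2 - int j - int m * int w" using Mle l21 by (simp add: of_nat_diff)
  have ke: "int k0 = int m + int e + 1" using e by simp
  have "int ((l2 - k0 * w - j) * (2 * k0 + 2 - Suc (2 * m)) + (w + j - l) * (2 * k0 + 1 - Suc (2 * m)) + (k0 * w + l - l2) * (2 * k0 - Suc (2 * m)))
     = (int l2 - int k0 * int w - int j) * (2 * int e + 3) + (int w + int j - int l) * (2 * int e + 2) + (int k0 * int w + int l - int l2) * (2 * int e + 1)"
    unfolding f1 of_nat_add of_nat_mult i1 i2 i3 by simp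
  also have "\<dots> = 2 * int l2 - int l - int j - 2 * (int m * int w)"
    unfolding ke by (simp add: algebra_simps iw)
  also have "\<dots> = int ((l2 - l - m * w) + (l1 - (l1 - l2 + j) - m * w))" unfolding of_nat_add i4 i5 by simp
  finally show ?thesis by (rule int_eqD[symmetric])
next
  case False
  show ?thesis
  proof (cases "m = k0")
    case True
    have "2 * k0 + 2 - Suc (2 * m) = 1" "2 * k0 + 1 - Suc (2 * m) = 0" "2 * k0 - Suc (2 * m) = 0" using True by auto
    thus ?thesis using True K1 K2 l21 by simp
  next
    case False
    hence "m \<ge> k0 + 1" using \<open>\<not> m < k0\<close> by simp
    hence "m * w \<ge> (k0 + 1) * w" by (rule mult_le_mono1)
    moreover have "(k0 + 1) * w = k0 * w + w" by simp
  ultimately have "m * w \<ge> l1" using K1 wdef by linarith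
    moreover have "2 * k0 + 2 - Suc (2 * m) = 0" "2 * k0 + 1 - Suc (2 * m) = 0" "2 * k0 - Suc (2 * m) = 0" using \<open>m \<ge> k0 + 1\<close> by auto
    ultimately show ?thesis using l21 by simp
  qed
qed

lemma arith_c:
  fixes q w \<rho> t :: nat
  assumes "\<rho> < w"
  shows "\<rho> * (q + 1 - t) + (w - \<rho>) * (q - t) = (q * w + \<rho>) - t * w"
proof (cases "t \<le> q")
  case True
  then obtain e where e: "q = t + e" using le_Suc_ex by blast
  have "int (\<rho> * (q + 1 - t) + (w - \<rho>) * (q - t)) = int \<rho> * (int e + 1) + (int w - int \<rho>) * int e"
    using assms e by (simp add: of_nat_diff algebra_simps)
  also have "\<dots> = int ((q * w + \<rho>) - t * w)" using e by (simp add: of_nat_diff algebra_simps)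
  finally show ?thesis by (rule int_eqD)
next
  case False
  hence "t \<ge> q + 1" by simp
  hence "t * w \<ge> (q + 1) * w" by (rule mult_le_mono1)
  hence "t * w \<ge> q * w + \<rho>" using assms by (simp add: algebra_simps)
  thus ?thesis using False by simp
qed

lemma arith_c_even:
  fixes l1 l2 M :: nat
  assumes "l2 \<le> l1" "\<not> (l2 \<le> M \<and> M < l1)"
  shows "(l1 - M) + (l2 - M) = (l1 + l2) - 2 * M"
  using assms by linarith

lemma arith_c_odd:
  fixes l1 l2 j l M h b w :: nat
  assumes "l2 \<le> l1" "j \<le> l" "l < l2" "h = (j + l) div 2" "b = l1 - l2 + (j + l - h)" "w = h + b"
  shows "(l2 - h - M) + (l1 - b - M) = (l1 + l2) - (w + 2 * M)"
proof -
  have d: "2 * h \<le> j + l" "j + l \<le> 2 * h + 1" using assms(4) by auto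
  define h' where "h' = j + l - h"
  have hh: "h \<le> h'" "h' \<le> h + 1" "h + h' = j + l" using d unfolding h'_def by auto
  have "b = l1 - l2 + h'" using assms(5) unfolding h'_def .
  thus ?thesis using hh assms(1-3,6) by linarith
qed



lemma fab_in_shapes:
  fixes B :: "'a :: field mat"
  assumes simB: "similar_mat B (pmat (l1 + l2) (jsucc l1 l2))"
    and l21: "l2 \<le> l1" and bb: "l1 \<le> b + l2" and ab: "1 \<le> a + b"
    and pos: "\<And>s. s \<in> set ls \<Longrightarrow> s > 0"
    and ev: "\<And>m. (l1 - m * (a + b)) + (l2 - m * (a + b)) = (\<Sum>s\<leftarrow>ls. s - 2 * m)"
    and od: "\<And>m. (l2 - a - m * (a + b)) + (l1 - b - m * (a + b)) = (\<Sum>s\<leftarrow>ls. s - Suc (2 * m))"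
  shows "mset ls \<in> shapes_NB (l1 + l2) B"
proof (rule shapes_NB_intro[OF simB fab_closed[OF l21 bb ab]])
  show "closed (l1 + l2) (jsucc l1 l2)" unfolding closed_def jsucc_def by auto
  show "\<And>x y z. x < l1 + l2 \<Longrightarrow> y < l1 + l2 \<Longrightarrow> fab l1 l2 a b x = Some z \<Longrightarrow> fab l1 l2 a b y = Some z \<Longrightarrow> x = y"
    by (rule fab_inj[OF l21 bb ab])
  show "inj_on (Kab l1 a b) {..<l1 + l2}" by (rule Kab_inj[OF l21 bb ab])
  show "\<And>x y. x < l1 + l2 \<Longrightarrow> fab l1 l2 a b x = Some y \<Longrightarrow> Kab l1 a b x < Kab l1 a b y"
    by (rule Kab_inc[OF l21 bb ab])
  show "\<And>x. x < l1 + l2 \<Longrightarrow> ocomp (fab l1 l2 a b) (jsucc l1 l2) x = ocomp (jsucc l1 l2) (fab l1 l2 a b) x"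
    by (rule fab_comm[OF l21 bb ab])
  show "\<And>s. s \<in> set ls \<Longrightarrow> s > 0" by (rule pos)
  fix k
  have "k = 2 * (k div 2) \<or> k = Suc (2 * (k div 2))" by presburger
  thus "card {x. x < l1 + l2 \<and> iter (fab l1 l2 a b) k x \<noteq> None} = (\<Sum>s\<leftarrow>ls. s - k)"
  proof
    assume k: "k = 2 * (k div 2)"
    show ?thesis using cnt_even[OF l21 bb ab, of "k div 2"] ev[of "k div 2"] k by metis
  next
    assume k: "k = Suc (2 * (k div 2))"
    show ?thesis using cnt_odd[OF l21 bb ab, of "k div 2"] od[of "k div 2"] k by metis
  qed
qed



lemma part_a:
  fixes B :: "'a :: field mat" and k :: int
  assumes simB: "similar_mat B (pmat (l1 + l2) (jsucc l1 l2))"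
    and l12: "l1 \<ge> l2" "l2 \<ge> 1"
    and jl: "j \<le> l" "l < l2"
    and w: "w = l1 - l2 + j + l" "w \<ge> 1"
    and k: "int l2 \<le> k * int w" "k * int w < int l1"
  shows "replicate_mset (nat (int l1 - k * int w)) (nat (2 * k + 1))
      + replicate_mset (w + l2 - l1) (nat (2 * k))
      + replicate_mset (nat (k * int w - int l2)) (nat (2 * k - 1)) \<in> shapes_NB (l1 + l2) B"
proof -
  have kpos: "k \<ge> 1"
  proof (rule ccontr)
    assume "\<not> k \<ge> 1" hence "k \<le> 0" by simp
    hence "k * int w \<le> 0" by (simp add: mult_nonpos_nonneg)
    thus False using k l12 by linarith
  qed
  define k0 where "k0 = nat k"
  have kk: "k = int k0" using kpos unfolding k0_def by simp
  have K1: "l2 \<le> k0 * w" using k(1) unfolding kk by (simp flip: of_nat_mult)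
  have K2: "k0 * w < l1" using k(2) unfolding kk by (simp flip: of_nat_mult)
  have k0: "k0 \<ge> 1" using kpos kk by simp
  define ls where "ls = replicate (l1 - k0 * w) (2 * k0 + 1) @ replicate (w + l2 - l1) (2 * k0) @ replicate (k0 * w - l2) (2 * k0 - 1)"
  have ms: "replicate_mset (nat (int l1 - k * int w)) (nat (2 * k + 1))
      + replicate_mset (w + l2 - l1) (nat (2 * k))
      + replicate_mset (nat (k * int w - int l2)) (nat (2 * k - 1)) = mset ls"
  proof -
    have "nat (int l1 - k * int w) = l1 - k0 * w" unfolding kk by (simp flip: of_nat_mult)
    moreover have "nat (k * int w - int l2) = k0 * w - l2" unfolding kk by (simp flip: of_nat_mult)
    moreover have "nat (2 * k + 1) = 2 * k0 + 1" "nat (2 * k) = 2 * k0" "nat (2 * k - 1) = 2 * k0 - 1"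
      unfolding kk using k0 by auto
    ultimately show ?thesis unfolding ls_def by (simp add: add.assoc)
  qed
  have W: "l1 \<le> l2 + w" using w l12 by simp
  have wdef: "w = l + (l1 - l2 + j)" using w l12 by simp
  have "mset ls \<in> shapes_NB (l1 + l2) B"
  proof (rule fab_in_shapes[OF simB l12(1), of "l1 - l2 + j" l])
    show "l1 \<le> l1 - l2 + j + l2" by simp
    show "1 \<le> l + (l1 - l2 + j)" using w wdef by simp
    show "\<And>s. s \<in> set ls \<Longrightarrow> s > 0" using k0 unfolding ls_def by auto
    fix m
    show "(l1 - m * (l + (l1 - l2 + j))) + (l2 - m * (l + (l1 - l2 + j))) = (\<Sum>s\<leftarrow>ls. s - 2 * m)"
      unfolding ls_def sum3 wdef[symmetric] by (rule arith_a_even[OF K1 K2 W k0])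
    show "(l2 - l - m * (l + (l1 - l2 + j))) + (l1 - (l1 - l2 + j) - m * (l + (l1 - l2 + j))) = (\<Sum>s\<leftarrow>ls. s - Suc (2 * m))"
      unfolding ls_def sum3 wdef[symmetric] by (rule arith_a_odd[OF l12(1) jl wdef K1 K2 k0])
  qed
  thus ?thesis unfolding ms .
qed

lemma part_b:
  fixes B :: "'a :: field mat" and k :: int
  assumes simB: "similar_mat B (pmat (l1 + l2) (jsucc l1 l2))"
    and l12: "l1 \<ge> l2" "l2 \<ge> 1"
    and jl: "j \<le> l" "l < l2"
    and w: "w = l1 - l2 + j + l" "w \<ge> 1"
    and k: "int l1 - int l \<le> k * int w" "k * int w < int l2 - int j"
  shows "replicate_mset (nat (int l2 - k * int w - int j)) (nat (2 * k + 2))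
      + replicate_mset (w + j - l) (nat (2 * k + 1))
      + replicate_mset (nat (k * int w + int l - int l2)) (nat (2 * k)) \<in> shapes_NB (l1 + l2) B"
proof -
  have kpos: "k \<ge> 1"
  proof (rule ccontr)
    assume "\<not> k \<ge> 1" hence "k \<le> 0" by simp
    hence "k * int w \<le> 0" by (simp add: mult_nonpos_nonneg)
    thus False using k l12 jl by linarith
  qed
  define k0 where "k0 = nat k"
  have kk: "k = int k0" using kpos unfolding k0_def by simp
  have K1: "l1 - l \<le> k0 * w" using k(1) unfolding kk by (simp flip: of_nat_mult)
  have K2: "k0 * w + j < l2" using k(2) unfolding kk by (simp flip: of_nat_mult)
  have k0: "k0 \<ge> 1" using kpos kk by simp
  define ls where "ls = replicate (l2 - k0 * w - j) (2 * k0 + 2) @ replicate (w + j - l) (2 * k0 + 1) @ replicate (k0 * w + l - l2) (2 * k0)"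
  have ms: "replicate_mset (nat (int l2 - k * int w - int j)) (nat (2 * k + 2))
      + replicate_mset (w + j - l) (nat (2 * k + 1))
      + replicate_mset (nat (k * int w + int l - int l2)) (nat (2 * k)) = mset ls"
  proof -
    have "nat (int l2 - k * int w - int j) = l2 - k0 * w - j" unfolding kk by (simp flip: of_nat_mult)
    moreover have "nat (k * int w + int l - int l2) = k0 * w + l - l2" unfolding kk by (simp flip: of_nat_mult)
    moreover have "nat (2 * k + 2) = 2 * k0 + 2" "nat (2 * k + 1) = 2 * k0 + 1" "nat (2 * k) = 2 * k0"
      unfolding kk using k0 by auto
    ultimately show ?thesis unfolding ls_def by (simp add: add.assoc)
  qed
  have wdef: "w = l + (l1 - l2 + j)" using w l12 by simp
  have "mset ls \<in> shapes_NB (l1 + l2) B"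
  proof (rule fab_in_shapes[OF simB l12(1), of "l1 - l2 + j" l])
    show "l1 \<le> l1 - l2 + j + l2" by simp
    show "1 \<le> l + (l1 - l2 + j)" using w wdef by simp
    show "\<And>s. s \<in> set ls \<Longrightarrow> s > 0" using k0 unfolding ls_def by auto
    fix m
    show "(l1 - m * (l + (l1 - l2 + j))) + (l2 - m * (l + (l1 - l2 + j))) = (\<Sum>s\<leftarrow>ls. s - 2 * m)"
      unfolding ls_def sum3 wdef[symmetric] by (rule arith_b_even[OF l12(1) jl wdef K1 K2])
    show "(l2 - l - m * (l + (l1 - l2 + j))) + (l1 - (l1 - l2 + j) - m * (l + (l1 - l2 + j))) = (\<Sum>s\<leftarrow>ls. s - Suc (2 * m))"
      unfolding ls_def sum3 wdef[symmetric] by (rule arith_b_odd[OF l12(1) jl wdef K1 K2])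
  qed
  thus ?thesis unfolding ms .
qed

lemma part_c:
  fixes B :: "'a :: field mat"
  assumes simB: "similar_mat B (pmat (l1 + l2) (jsucc l1 l2))"
    and l12: "l1 \<ge> l2" "l2 \<ge> 1"
    and jl: "j \<le> l" "l < l2"
    and w: "w = l1 - l2 + j + l" "w \<ge> 1"
    and na: "\<not> (\<exists>k::int. int l2 \<le> k * int w \<and> k * int w < int l1)"
  shows "almost_rect (l1 + l2) w \<in> shapes_NB (l1 + l2) B"
proof -
  define n where "n = l1 + l2"
  define h where "h = (j + l) div 2"
  define b where "b = l1 - l2 + (j + l - h)"
  have wab: "w = h + b" unfolding b_def h_def using w l12 by simp
  have wn: "w \<le> n" unfolding n_def using w l12 jl by simp
  define q where "q = n div w"
  define \<rho> where "\<rho> = n mod w"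
  have nq: "n = q * w + \<rho>" unfolding q_def \<rho>_def by simp
  have rw: "\<rho> < w" unfolding \<rho>_def using w(2) by simp
  have q1: "q \<ge> 1" unfolding q_def using wn w(2) div_greater_zero_iff[of n w] by linarith
  define ls where "ls = replicate \<rho> (q + 1) @ replicate (w - \<rho>) q @ replicate 0 0"
  have ar: "almost_rect n w = mset ls" unfolding almost_rect_def ls_def q_def \<rho>_def using wn by simp
  have sums: "(\<Sum>s\<leftarrow>ls. s - t) = n - t * w" for t
    unfolding ls_def sum3 nq using arith_c[OF rw, of q t] by simp
  have "mset ls \<in> shapes_NB (l1 + l2) B"
  proof (rule fab_in_shapes[OF simB l12(1), of b h])
    show "l1 \<le> b + l2" unfolding b_def by simp
    show "1 \<le> h + b" using w wab by simp
    show "\<And>s. s \<in> set ls \<Longrightarrow> s > 0" using q1 unfolding ls_def by auto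
    fix m
    have nm: "\<not> (l2 \<le> m * w \<and> m * w < l1)"
    proof
      assume "l2 \<le> m * w \<and> m * w < l1"
      hence "int l2 \<le> int m * int w \<and> int m * int w < int l1" by (simp flip: of_nat_mult)
      thus False using na by blast
    qed
    show "(l1 - m * (h + b)) + (l2 - m * (h + b)) = (\<Sum>s\<leftarrow>ls. s - 2 * m)"
      unfolding sums wab[symmetric] n_def using arith_c_even[OF l12(1) nm] by (simp add: algebra_simps)
    have "(l2 - h - m * w) + (l1 - b - m * w) = (l1 + l2) - (w + 2 * (m * w))"
      by (rule arith_c_odd[OF l12(1) jl h_def b_def wab])
    thus "(l2 - h - m * (h + b)) + (l1 - b - m * (h + b)) = (\<Sum>s\<leftarrow>ls. s - Suc (2 * m))"
      unfolding sums wab[symmetric] n_def by (simp add: algebra_simps)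
  qed
  thus ?thesis unfolding n_def[symmetric] ar .
qed

theorem theorem3p6:
  fixes B :: "'a :: field_char_0 mat"
    and n l1 l2 j l w :: nat
  assumes alg_closed: "\<And>q :: 'a poly. degree q > 0 \<Longrightarrow> \<exists>x. poly q x = 0"
    and B: "B \<in> carrier_mat n n" "nilpotent_mat B"
    and shB: "has_shape B {#l1, l2#}"
    and l12: "l1 \<ge> l2" "l2 \<ge> 1" "n = l1 + l2"
    and jl: "j \<le> l" "l < l2"
    and w: "w = l1 - l2 + j + l" "w \<ge> 1"
  shows
    "(\<forall>k::int. int l2 \<le> k * int w \<and> k * int w < int l1 \<longrightarrow>
        replicate_mset (nat (int l1 - k * int w)) (nat (2 * k + 1))
      + replicate_mset (w + l2 - l1) (nat (2 * k))
      + replicate_mset (nat (k * int w - int l2)) (nat (2 * k - 1)) \<in> shapes_NB n B)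
   \<and> (\<forall>k::int. int l1 - int l \<le> k * int w \<and> k * int w < int l2 - int j \<longrightarrow>
        replicate_mset (nat (int l2 - k * int w - int j)) (nat (2 * k + 2))
      + replicate_mset (w + j - l) (nat (2 * k + 1))
      + replicate_mset (nat (k * int w + int l - int l2)) (nat (2 * k)) \<in> shapes_NB n B)
   \<and> ((\<not> (\<exists>k::int. int l2 \<le> k * int w \<and> k * int w < int l1))
       \<and> (\<not> (\<exists>k::int. int l1 - int l \<le> k * int w \<and> k * int w < int l2 - int j))
       \<longrightarrow> almost_rect n w \<in> shapes_NB n B)"
proof -
  have sim: "similar_mat B (pmat n (jsucc l1 l2))" by (rule B_similar[OF B shB l12(3)])
  hence simB: "similar_mat B (pmat (l1 + l2) (jsucc l1 l2))" using l12 by simp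
  show ?thesis
    using part_a[OF simB l12(1,2) jl w] part_b[OF simB l12(1,2) jl w] part_c[OF simB l12(1,2) jl w]
    unfolding l12(3) by blast
qed

end
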